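(* Suppose the embedding errors are bounded as $\sup_{s,g\in\mathcal{S}}\bigl|d^*(s,g)-\|\phi(s)-\phi(g)\|\bigr|\le\epsilon_e$, the directional movement errors are bounded as $\sup_{s,g\in\mathcal{S}}\|z'^*(s,g)-\hat z'(s,g)\|\le\epsilon_d$, and $4\epsilon_e+\epsilon_d<1$. Then $\hat\pi$ is an optimal goal-reaching policy, i.e. for every $s,g\in\mathcal{S}$ with $s\neq g$, $d^*(p(s,\hat\pi(s,g)),g)=d^*(s,g)-1$.
   Context: Consider a deterministic Markov decision process with state space $\mathcal{S}$, action space $\mathcal{A}$ and deterministic transition function $p:\mathcal{S}\times\mathcal{A}\to\mathcal{S}$. Let $d^*:\mathcal{S}\times\mathcal{S}\to\mathbb{R}$ be the optimal temporal distance: $d^*(s,g)$ is the minimum number of time steps needed to reach $g$ from $s$, so it is a nonnegative integer and $d^*(s,s)=0$. Let $\phi:\mathcal{S}\to\mathcal{Z}$ be a map into a real Hilbert space with inner product $\langle\cdot,\cdot\rangle$ and induced norm $\|\cdot\|$. Let $N(s):=\{p(s,a):a\in\mathcal{A}\}$. For a state $s$ and a goal $g$ define $$z'^*(s,g):=\phi(s)+\frac{\phi(g)-\phi(s)}{\|\phi(g)-\phi(s)\|},$$ $$\hat\pi(s,g):=\arg\max_{a\in\mathcal{A}}\Bigl\langle\phi(s')-\phi(s),\frac{\phi(g)-\phi(s)}{\|\phi(g)-\phi(s)\|}\Bigr\rangle\ \text{ subject to } s'=p(s,a),\ \|\phi(s)-\phi(s')\|\le1,$$ $$\hat z'(s,g):=\phi\bigl(p(s,\hat\pi(s,g))\bigr).$$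 A goal-conditioned policy is optimal if, at every state-goal pair $(s,g)$ with $s\neq g$, the action it chooses decreases the temporal distance to $g$ by exactly one. *)

theory Defs
  imports "HOL-Analysis.Analysis"
begin

definition run :: "('s \<Rightarrow> 'a \<Rightarrow> 's) \<Rightarrow> 's \<Rightarrow> 'a list \<Rightarrow> 's" where
  "run p s as = foldl p s as"

definition dstar :: "('s \<Rightarrow> 'a \<Rightarrow> 's) \<Rightarrow> 's \<Rightarrow> 's \<Rightarrow> nat" where
  "dstar p s g = (LEAST n. \<exists>as. length as = n \<and> run p s as = g)"

definition dirn :: "('s \<Rightarrow> 'z::real_normed_vector) \<Rightarrow> 's \<Rightarrow> 's \<Rightarrow> 'z" where
  "dirn \<phi> s g = (\<phi> g - \<phi> s) /\<^sub>R norm (\<phi> g - \<phi> s)"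

definition zstar :: "('s \<Rightarrow> 'z::real_normed_vector) \<Rightarrow> 's \<Rightarrow> 's \<Rightarrow> 'z" where
  "zstar \<phi> s g = \<phi> s + dirn \<phi> s g"

definition feasible :: "('s \<Rightarrow> 'a \<Rightarrow> 's) \<Rightarrow> ('s \<Rightarrow> 'z::real_normed_vector) \<Rightarrow> 's \<Rightarrow> 'a \<Rightarrow> bool" where
  "feasible p \<phi> s a \<longleftrightarrow> norm (\<phi> s - \<phi> (p s a)) \<le> 1"

definition is_argmax_action ::
  "('s \<Rightarrow> 'a \<Rightarrow> 's) \<Rightarrow> ('s \<Rightarrow> 'z::real_inner) \<Rightarrow> 's \<Rightarrow> 's \<Rightarrow> 'a \<Rightarrow> bool" where
  "is_argmax_action p \<phi> s g a \<longleftrightarrow>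
     feasible p \<phi> s a \<and>
     (\<forall>b. feasible p \<phi> s b \<longrightarrow>
        inner (\<phi> (p s b) - \<phi> s) (dirn \<phi> s g) \<le> inner (\<phi> (p s a) - \<phi> s) (dirn \<phi> s g))"

definition zhat :: "('s \<Rightarrow> 'a \<Rightarrow> 's) \<Rightarrow> ('s \<Rightarrow> 'z) \<Rightarrow> ('s \<Rightarrow> 's \<Rightarrow> 'a) \<Rightarrow> 's \<Rightarrow> 's \<Rightarrow> 'z" where
  "zhat p \<phi> \<pi> s g = \<phi> (p s (\<pi> s g))"

end

theory Submission
  imports Defs
begin

lemma dstar_ex:
  assumes "\<exists>as. run p s as = g"
  shows "\<exists>as. length as = dstar p s g \<and> run p s as = g"
proof -
  from assms obtain bs where "run p s bs = g" by blast
  then have "\<exists>as. length as = length bs \<and> run p s as = g" by blast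
  then show ?thesis unfolding dstar_def by (rule LeastI[where P="\<lambda>n. \<exists>as. length as = n \<and> run p s as = g"])
qed

lemma dstar_le: "run p s as = g \<Longrightarrow> dstar p s g \<le> length as"
  unfolding dstar_def by (rule Least_le) auto

lemma dstar_pos: "s \<noteq> g \<Longrightarrow> \<exists>as. run p s as = g \<Longrightarrow> dstar p s g \<ge> 1"
proof (rule ccontr)
  assume "s \<noteq> g" "\<exists>as. run p s as = g" "\<not> dstar p s g \<ge> 1"
  then have "dstar p s g = 0" by simp
  then obtain as where "length as = 0" "run p s as = g" using dstar_ex[of p s g] \<open>\<exists>as. run p s as = g\<close> by metis
  then show False using \<open>s \<noteq> g\<close> by (simp add: run_def)
qed

lemma dstar_step: "\<exists>as. run p (p s a) as = g \<Longrightarrow> dstar p s g \<le> 1 + dstar p (p s a) g"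
proof -
  assume "\<exists>as. run p (p s a) as = g"
  from dstar_ex[OF this] obtain as where "length as = dstar p (p s a) g" "run p (p s a) as = g" by blast
  then have "run p s (a # as) = g" by (simp add: run_def)
  from dstar_le[OF this] show ?thesis using \<open>length as = _\<close> by simp
qed

theorem corollaryC3:
  fixes p :: "'s \<Rightarrow> 'a \<Rightarrow> 's"
    and \<phi> :: "'s \<Rightarrow> 'z::{real_inner, complete_space}"
    and \<pi> :: "'s \<Rightarrow> 's \<Rightarrow> 'a"
    and \<epsilon>e \<epsilon>d :: real
  assumes reach: "\<And>s g. \<exists>as. run p s as = g"
    and pihat: "\<And>s g. s \<noteq> g \<Longrightarrow> is_argmax_action p \<phi> s g (\<pi> s g)"
    and emb: "\<And>s g. \<bar>real (dstar p s g) - norm (\<phi> s - \<phi> g)\<bar> \<le> \<epsilon>e"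
    and dir: "\<And>s g. s \<noteq> g \<Longrightarrow> norm (zstar \<phi> s g - zhat p \<phi> \<pi> s g) \<le> \<epsilon>d"
    and small: "4 * \<epsilon>e + \<epsilon>d < 1"
  shows "\<forall>s g. s \<noteq> g \<longrightarrow> dstar p (p s (\<pi> s g)) g = dstar p s g - 1"
proof (intro allI impI)
  fix s g :: 's assume sg: "s \<noteq> g"
  define s' :: 's where "s' = p s (\<pi> s g)"
  define D :: nat where "D = dstar p s g"
  define L where "L = norm (\<phi> g - \<phi> s)"
  have e0: "\<epsilon>e \<ge> 0" using emb[of s s] by simp
  have d0: "\<epsilon>d \<ge> 0" using dir[OF sg] norm_ge_zero order_trans by blast
  have D1: "D \<ge> 1" unfolding D_def using dstar_pos[OF sg reach] .
  have step: "D \<le> 1 + dstar p s' g" unfolding D_def s'_def by (rule dstar_step[OF reach])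
  have eL: "\<bar>real D - L\<bar> \<le> \<epsilon>e" using emb[of s g] by (simp add: D_def L_def norm_minus_commute)
  have e1: "\<bar>real (dstar p s' g) - norm (\<phi> s' - \<phi> g)\<bar> \<le> \<epsilon>e" using emb .
  have Lpos: "L > 0" using eL D1 e0 small d0 by linarith
  define u where "u = \<phi> g - \<phi> s"
  have zs: "zstar \<phi> s g - \<phi> g = ((1 / L) - 1) *\<^sub>R u"
    unfolding zstar_def dirn_def u_def L_def by (simp add: algebra_simps divide_inverse_commute)
  have "norm (zstar \<phi> s g - \<phi> g) = \<bar>1/L - 1\<bar> * L"
    using zs by (simp add: L_def u_def)
  also have "\<dots> = \<bar>1 - L\<bar>" using Lpos
    by (metis abs_of_pos diff_divide_distrib abs_mult_pos div_by_1 divide_self_if order_less_irrefl times_divide_eq_left times_divide_eq_right mult.commute abs_divide abs_minus_commute nonzero_mult_div_cancel_left)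
  finally have n1: "norm (zstar \<phi> s g - \<phi> g) = \<bar>1 - L\<bar>" .
  have "norm (\<phi> s' - \<phi> g) \<le> norm (\<phi> s' - zstar \<phi> s g) + norm (zstar \<phi> s g - \<phi> g)"
    using norm_triangle_ineq[of "\<phi> s' - zstar \<phi> s g" "zstar \<phi> s g - \<phi> g"] by simp
  also have "norm (\<phi> s' - zstar \<phi> s g) \<le> \<epsilon>d"
    using dir[OF sg] by (simp add: zhat_def s'_def norm_minus_commute)
  finally have n2: "norm (\<phi> s' - \<phi> g) \<le> \<epsilon>d + \<bar>1 - L\<bar>" using n1 by simp
  have "real (dstar p s' g) < real D" using n2 e1 eL D1 small e0 d0 by linarith
  then show "dstar p (p s (\<pi> s g)) g = dstar p s g - 1" using step unfolding s'_def[symmetric] D_def[symmetric] by linarith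
qed

end
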